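(* For every two-dimensional Minkowski space $X$ we have $m(X)=3$.
   Context: A Minkowski space is a finite-dimensional real normed space $(X,\|\cdot\|)$. For a set $S\subseteq X$, its midpoint set is $M(S)=\{\tfrac12(x+y): x,y\in S,\ x\neq y\}$. A set $S\subseteq X$ is an M-set if every vector in $M(S)$ has norm exactly $1$ and every vector in $S$ has norm strictly greater than $1$. $m(X)$ denotes the largest cardinality of an M-set in $X$ if such a largest finite cardinality exists, and $m(X)=\infty$ otherwise. *)

theory Defs
  imports "HOL-Analysis.Analysis" "HOL-Library.Extended_Nat"
begin

definition midpoint_set :: "'a::real_vector set \<Rightarrow> 'a set" where
  "midpoint_set S = {(1/2) *\<^sub>R (x + y) | x y. x \<in> S \<and> y \<in> S \<and> x \<noteq> y}"

definition M_set :: "'a::real_normed_vector set \<Rightarrow> bool" where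
  "M_set S \<longleftrightarrow> (\<forall>z \<in> midpoint_set S. norm z = 1) \<and> (\<forall>x \<in> S. norm x > 1)"

definition m_num :: "'a::real_normed_vector itself \<Rightarrow> enat" where
  "m_num _ = (if (\<exists>n::nat. (\<exists>S::'a set. M_set S \<and> finite S \<and> card S = n) \<and>
                       (\<forall>S::'a set. M_set S \<longrightarrow> finite S \<and> card S \<le> n))
              then enat (GREATEST n. \<exists>S::'a set. M_set S \<and> finite S \<and> card S = n)
              else \<infinity>)"

end

theory Submission
  imports Defs
begin

lemma mid_norm:
  assumes "M_set S" "x \<in> S" "y \<in> S" "x \<noteq> y"
  shows "norm (x + y) = 2"
proof -
  have "(1/2) *\<^sub>R (x + y) \<in> midpoint_set S"
    using assms unfolding midpoint_set_def by blast
  then have "norm ((1/2) *\<^sub>R (x + y)) = 1" using assms(1) unfolding M_set_def by blast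
  then show ?thesis by simp
qed

lemma out_norm: "M_set S \<Longrightarrow> x \<in> S \<Longrightarrow> norm x > 1"
  unfolding M_set_def by blast

lemma one_pos:
  fixes a b c d :: "'a::real_normed_vector"
  assumes M: "M_set S" and ins: "a \<in> S" "b \<in> S" "c \<in> S" "d \<in> S"
    and ne: "a \<noteq> b" "a \<noteq> c" "a \<noteq> d"
    and sg: "p > 0" "q \<le> 0" "r \<le> 0" "s \<le> 0" and sm: "p + q + r + s = 0"
    and eq: "p *\<^sub>R a + q *\<^sub>R b + r *\<^sub>R c + s *\<^sub>R d = 0"
  shows False
proof -
  have "(-q) *\<^sub>R (a+b) + (-r) *\<^sub>R (a+c) + (-s) *\<^sub>R (a+d)
      = (-(q+r+s)) *\<^sub>R a - (p *\<^sub>R a + q *\<^sub>R b + r *\<^sub>R c + s *\<^sub>R d) + p *\<^sub>R a"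
    by (simp add: algebra_simps)
  also have "\<dots> = p *\<^sub>R a + p *\<^sub>R a"
  proof -
    have "-(q+r+s) = p" using sm by linarith
    then show ?thesis using eq by simp
  qed
  also have "\<dots> = (2*p) *\<^sub>R a" by (simp add: scaleR_left_distrib[symmetric])
  finally have e: "(2*p) *\<^sub>R a = (-q) *\<^sub>R (a+b) + (-r) *\<^sub>R (a+c) + (-s) *\<^sub>R (a+d)" by simp
  have "norm ((2*p) *\<^sub>R a) \<le> norm ((-q) *\<^sub>R (a+b)) + norm ((-r) *\<^sub>R (a+c)) + norm ((-s) *\<^sub>R (a+d))"
    unfolding e by (meson norm_triangle_ineq order_trans add_mono order_refl)
  also have "\<dots> = (-q) * 2 + (-r) * 2 + (-s) * 2"
    using sg mid_norm[OF M ins(1) ins(2) ne(1)] mid_norm[OF M ins(1) ins(3) ne(2)] mid_norm[OF M ins(1) ins(4) ne(3)]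
    by simp
  finally have "2 * p * norm a \<le> - (q * 2) - r * 2 - s * 2" using sg by simp
  then have "(2 * p) * norm a \<le> (2 * p) * 1" using sm by linarith
  then have "norm a \<le> 1" using sg by (simp add: mult_le_cancel_left)
  with out_norm[OF M ins(1)] show False by simp
qed

lemma span2:
  fixes x u v :: "'a::real_vector"
  assumes "x \<in> span {u, v}" shows "\<exists>\<sigma> \<tau>. x = \<sigma> *\<^sub>R u + \<tau> *\<^sub>R v"
proof -
  from assms obtain k where "x - k *\<^sub>R u \<in> span {v}" using real_vector.span_breakdown_eq by blast
  then obtain l where "x - k *\<^sub>R u = l *\<^sub>R v" using real_vector.span_singleton by auto
  then have "x = k *\<^sub>R u + l *\<^sub>R v" by (simp add: algebra_simps)
  then show ?thesis by blast
qed

lemma span1: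
  fixes x v :: "'a::real_vector"
  assumes "x \<in> span {v}" shows "\<exists>k. x = k *\<^sub>R v"
  using assms real_vector.span_singleton by auto

lemma indep1: "(v::'a::real_vector) \<noteq> 0 \<Longrightarrow> independent {v}"
  by (simp add: real_vector.independent_insert)

lemma no3:
  fixes x u v :: "'a::real_vector"
  assumes d: "dim (UNIV :: 'a set) = 2" and i: "independent {x, u, v}"
    and ne: "x \<noteq> u" "x \<noteq> v" "u \<noteq> v"
  shows False
proof -
  obtain B :: "'a set" where B: "independent B" "UNIV \<subseteq> span B" "card B = dim (UNIV::'a set)"
    using real_vector.basis_exists by blast
  then have fB: "finite B" "card B = 2" using d by (auto intro: card_ge_0_finite)
  have "card {x,u,v} \<le> card B" using real_vector.independent_span_bound[OF fB(1) i] B by auto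
  then show False using fB ne by simp
qed

lemma cross:
  fixes a b c d :: "'a::real_normed_vector"
  assumes M: "M_set S" and ins: "a \<in> S" "b \<in> S" "c \<in> S" "d \<in> S"
    and ne: "a \<noteq> c" "a \<noteq> d" "b \<noteq> c" "b \<noteq> d"
    and al: "0 \<le> \<alpha>" "\<alpha> \<le> 1" and be: "0 \<le> \<beta>" "\<beta> \<le> 1"
  shows "norm ((1/2) *\<^sub>R (\<alpha> *\<^sub>R a + (1-\<alpha>) *\<^sub>R b + \<beta> *\<^sub>R c + (1-\<beta>) *\<^sub>R d)) \<le> 1"
proof -
  have e: "(1/2) *\<^sub>R (\<alpha> *\<^sub>R a + (1-\<alpha>) *\<^sub>R b + \<beta> *\<^sub>R c + (1-\<beta>) *\<^sub>R d)
    = (\<alpha>*\<beta>/2) *\<^sub>R (a+c) + (\<alpha>*(1-\<beta>)/2) *\<^sub>R (a+d) + ((1-\<alpha>)*\<beta>/2) *\<^sub>R (b+c) + ((1-\<alpha>)*(1-\<beta>)/2) *\<^sub>R (b+d)"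
  proof -
    let ?A = "\<alpha>*\<beta>/2" and ?B = "\<alpha>*(1-\<beta>)/2" and ?C = "(1-\<alpha>)*\<beta>/2" and ?D = "(1-\<alpha>)*(1-\<beta>)/2"
    have "?A *\<^sub>R (a+c) + ?B *\<^sub>R (a+d) + ?C *\<^sub>R (b+c) + ?D *\<^sub>R (b+d)
       = (?A *\<^sub>R a + ?B *\<^sub>R a) + (?C *\<^sub>R b + ?D *\<^sub>R b) + (?A *\<^sub>R c + ?C *\<^sub>R c) + (?B *\<^sub>R d + ?D *\<^sub>R d)"
      by (simp only: scaleR_add_right add_ac)
    also have "\<dots> = (?A + ?B) *\<^sub>R a + (?C + ?D) *\<^sub>R b + (?A + ?C) *\<^sub>R c + (?B + ?D) *\<^sub>R d"
      by (simp only: scaleR_left_distrib)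
    also have "?A + ?B = (1/2) * \<alpha>" by (simp add: field_simps)
    also have "?C + ?D = (1/2) * (1-\<alpha>)" by (simp add: field_simps)
    also have "?A + ?C = (1/2) * \<beta>" by (simp add: field_simps)
    also have "?B + ?D = (1/2) * (1-\<beta>)" by (simp add: field_simps)
    finally show ?thesis by (simp only: scaleR_add_right scaleR_scaleR)
  qed
  have n1: "0 \<le> \<alpha>*\<beta>" "0 \<le> \<alpha>*(1-\<beta>)" "0 \<le> (1-\<alpha>)*\<beta>" "0 \<le> (1-\<alpha>)*(1-\<beta>)"
    using al be by auto
  have "norm ((\<alpha>*\<beta>/2) *\<^sub>R (a+c) + (\<alpha>*(1-\<beta>)/2) *\<^sub>R (a+d) + ((1-\<alpha>)*\<beta>/2) *\<^sub>R (b+c) + ((1-\<alpha>)*(1-\<beta>)/2) *\<^sub>R (b+d))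
     \<le> norm ((\<alpha>*\<beta>/2) *\<^sub>R (a+c)) + norm ((\<alpha>*(1-\<beta>)/2) *\<^sub>R (a+d)) + norm (((1-\<alpha>)*\<beta>/2) *\<^sub>R (b+c)) + norm (((1-\<alpha>)*(1-\<beta>)/2) *\<^sub>R (b+d))"
    by (meson norm_triangle_ineq order_trans add_mono order_refl)
  also have "\<dots> = \<alpha>*\<beta> + \<alpha>*(1-\<beta>) + (1-\<alpha>)*\<beta> + (1-\<alpha>)*(1-\<beta>)"
    using n1 mid_norm[OF M ins(1) ins(3) ne(1)] mid_norm[OF M ins(1) ins(4) ne(2)]
      mid_norm[OF M ins(2) ins(3) ne(3)] mid_norm[OF M ins(2) ins(4) ne(4)]
    by simp
  also have "\<dots> = 1" by (simp add: algebra_simps)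
  finally show ?thesis unfolding e .
qed

lemma neg4: "p *\<^sub>R a + q *\<^sub>R b + r *\<^sub>R c + s *\<^sub>R d = (0::'a::real_vector) \<Longrightarrow>
  (-p) *\<^sub>R a + (-q) *\<^sub>R b + (-r) *\<^sub>R c + (-s) *\<^sub>R d = 0"
proof -
  assume h: "p *\<^sub>R a + q *\<^sub>R b + r *\<^sub>R c + s *\<^sub>R d = 0"
  have "(-p) *\<^sub>R a + (-q) *\<^sub>R b + (-r) *\<^sub>R c + (-s) *\<^sub>R d = - (p *\<^sub>R a + q *\<^sub>R b + r *\<^sub>R c + s *\<^sub>R d)"
    by (simp add: algebra_simps)
  then show ?thesis using h by simp
qed

lemma three_case:
  fixes a b c :: "'a::real_normed_vector"
  assumes M: "M_set S" and ins: "a \<in> S" "b \<in> S" "c \<in> S"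
    and ne: "a \<noteq> b" "a \<noteq> c" "b \<noteq> c"
    and sm: "p + q + r = 0" and eq: "p *\<^sub>R a + q *\<^sub>R b + r *\<^sub>R c = 0"
    and nz: "\<not> (p = 0 \<and> q = 0 \<and> r = 0)"
  shows False
proof -
  have e1: "p *\<^sub>R a + q *\<^sub>R b + r *\<^sub>R c + 0 *\<^sub>R b = 0" using eq by simp
  have e2: "q *\<^sub>R b + p *\<^sub>R a + r *\<^sub>R c + 0 *\<^sub>R a = 0" using eq by (simp add: algebra_simps)
  have e3: "r *\<^sub>R c + p *\<^sub>R a + q *\<^sub>R b + 0 *\<^sub>R a = 0" using eq by (simp add: algebra_simps)
  have h1: "\<not> (p > 0 \<and> q \<le> 0 \<and> r \<le> 0)"
    using one_pos[OF M ins(1) ins(2) ins(3) ins(2) ne(1) ne(2) ne(1), of p q r 0] e1 sm by auto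
  have h2: "\<not> (q > 0 \<and> p \<le> 0 \<and> r \<le> 0)"
    using one_pos[OF M ins(2) ins(1) ins(3) ins(1), of q p r 0] ne e2 sm by auto
  have h3: "\<not> (r > 0 \<and> p \<le> 0 \<and> q \<le> 0)"
    using one_pos[OF M ins(3) ins(1) ins(2) ins(1), of r p q 0] ne e3 sm by auto
  have h4: "\<not> (p < 0 \<and> q \<ge> 0 \<and> r \<ge> 0)"
    using one_pos[OF M ins(1) ins(2) ins(3) ins(2) ne(1) ne(2) ne(1), of "-p" "-q" "-r" 0] neg4[OF e1] sm by auto
  have h5: "\<not> (q < 0 \<and> p \<ge> 0 \<and> r \<ge> 0)"
    using one_pos[OF M ins(2) ins(1) ins(3) ins(1), of "-q" "-p" "-r" 0] ne neg4[OF e2] sm by auto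
  have h6: "\<not> (r < 0 \<and> p \<ge> 0 \<and> q \<ge> 0)"
    using one_pos[OF M ins(3) ins(1) ins(2) ins(1), of "-r" "-p" "-q" 0] ne neg4[OF e3] sm by auto
  show False using h1 h2 h3 h4 h5 h6 sm nz by linarith
qed

lemma two_pos:
  fixes a b c d :: "'a::real_normed_vector"
  assumes d2: "dim (UNIV :: 'a set) = 2"
    and M: "M_set S" and ins: "a \<in> S" "b \<in> S" "c \<in> S" "d \<in> S"
    and ne: "a \<noteq> b" "a \<noteq> c" "a \<noteq> d" "b \<noteq> c" "b \<noteq> d" "c \<noteq> d"
    and sg: "p > 0" "q > 0" "r < 0" "s < 0" and sm: "p + q + r + s = 0"
    and eq: "p *\<^sub>R a + q *\<^sub>R b + r *\<^sub>R c + s *\<^sub>R d = 0"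
  shows False
proof -
  define T where "T = p + q"
  have T0: "T > 0" using sg T_def by simp
  define u where "u = a - b"
  define v where "v = c - d"
  define \<alpha> where "\<alpha> = q / T"
  define \<beta> where "\<beta> = - r / T"
  have al: "0 < \<alpha>" "\<alpha> < 1" using sg T0 unfolding \<alpha>_def T_def by (auto simp: field_simps)
  have be: "0 < \<beta>" "\<beta> < 1" using sg sm T0 unfolding \<beta>_def T_def by (auto simp: field_simps)
  have sdef: "s = -(p+q+r)" using sm by linarith
  have "T *\<^sub>R (a - d) - (q *\<^sub>R u + (-r) *\<^sub>R v) = p *\<^sub>R a + q *\<^sub>R b + r *\<^sub>R c + s *\<^sub>R d"
    unfolding T_def u_def v_def sdef by (simp add: algebra_simps)
  then have "T *\<^sub>R (a - d) = q *\<^sub>R u + (-r) *\<^sub>R v" using eq by simp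
  then have "(1/T) *\<^sub>R (T *\<^sub>R (a - d)) = (1/T) *\<^sub>R (q *\<^sub>R u + (-r) *\<^sub>R v)" by simp
  then have ad: "a - d = \<alpha> *\<^sub>R u + \<beta> *\<^sub>R v"
    using T0 unfolding \<alpha>_def \<beta>_def by (simp add: scaleR_add_right scaleR_diff_right)
  define m where "m = (1/2) *\<^sub>R (a + b)"
  have nm: "norm m = 1" using mid_norm[OF M ins(1) ins(2) ne(1)] unfolding m_def by simp
  have Qe: "(1/2) *\<^sub>R (x *\<^sub>R a + (1-x) *\<^sub>R b + y *\<^sub>R c + (1-y) *\<^sub>R d)
      = m + (1/2) *\<^sub>R ((x - \<alpha>) *\<^sub>R u + (y - \<beta>) *\<^sub>R v)" for x y
  proof -
    have "x *\<^sub>R a + (1-x) *\<^sub>R b + y *\<^sub>R c + (1-y) *\<^sub>R d = b + d + x *\<^sub>R u + y *\<^sub>R v"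
      unfolding u_def v_def by (simp add: algebra_simps)
    also have "\<dots> = (a + b) + ((x - \<alpha>) *\<^sub>R u + (y - \<beta>) *\<^sub>R v) - (a - d - (\<alpha> *\<^sub>R u + \<beta> *\<^sub>R v))"
      by (simp add: algebra_simps)
    also have "\<dots> = (a + b) + ((x - \<alpha>) *\<^sub>R u + (y - \<beta>) *\<^sub>R v)" using ad by simp
    finally show ?thesis unfolding m_def by (simp add: scaleR_add_right)
  qed
  show False
  proof (cases "u \<noteq> v \<and> independent {u, v}")
    case True
    have "m \<in> span {u, v}"
    proof (rule ccontr)
      assume nm': "m \<notin> span {u, v}"
      then have "independent (insert m {u, v})" using True real_vector.independent_insertI by blast
      moreover have "m \<noteq> u" "m \<noteq> v" using nm' real_vector.span_base[of u "{u,v}"] real_vector.span_base[of v "{u,v}"] by auto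
      ultimately show False using no3[OF d2] True by blast
    qed
    then obtain \<sigma> \<tau> where st: "m = \<sigma> *\<^sub>R u + \<tau> *\<^sub>R v" using span2 by blast
    define e where "e = min (min \<alpha> (1-\<alpha>)) (min \<beta> (1-\<beta>))"
    have e0: "e > 0" using al be unfolding e_def by simp
    define K where "K = \<bar>\<sigma>\<bar> + \<bar>\<tau>\<bar> + 1"
    have K0: "K > 0" unfolding K_def by simp
    define \<delta> where "\<delta> = e / (2 * K)"
    have d0: "\<delta> > 0" using e0 K0 unfolding \<delta>_def by simp
    have dK: "2 * \<delta> * K = e" using K0 unfolding \<delta>_def by simp
    have b1: "\<bar>2 * \<delta> * \<sigma>\<bar> \<le> e"
    proof -
      have "\<bar>2 * \<delta> * \<sigma>\<bar> = 2 * \<delta> * \<bar>\<sigma>\<bar>" using d0 by (simp add: abs_mult)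
      also have "\<dots> \<le> 2 * \<delta> * K" using d0 unfolding K_def by (intro mult_left_mono) auto
      finally show ?thesis using dK by simp
    qed
    have b2: "\<bar>2 * \<delta> * \<tau>\<bar> \<le> e"
    proof -
      have "\<bar>2 * \<delta> * \<tau>\<bar> = 2 * \<delta> * \<bar>\<tau>\<bar>" using d0 by (simp add: abs_mult)
      also have "\<dots> \<le> 2 * \<delta> * K" using d0 unfolding K_def by (intro mult_left_mono) auto
      finally show ?thesis using dK by simp
    qed
    define x where "x = \<alpha> + 2 * \<delta> * \<sigma>"
    define y where "y = \<beta> + 2 * \<delta> * \<tau>"
    have xy: "0 \<le> x" "x \<le> 1" "0 \<le> y" "y \<le> 1"
      using b1 b2 unfolding x_def y_def e_def by (auto simp: abs_le_iff)
    have "(1/2) *\<^sub>R (x *\<^sub>R a + (1-x) *\<^sub>R b + y *\<^sub>R c + (1-y) *\<^sub>R d) = m + \<delta> *\<^sub>R m"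
      unfolding Qe st x_def y_def by (simp add: algebra_simps)
    also have "\<dots> = (1 + \<delta>) *\<^sub>R m" by (simp add: algebra_simps)
    finally have "norm ((1 + \<delta>) *\<^sub>R m) \<le> 1"
      using cross[OF M ins ne(2) ne(3) ne(4) ne(5) xy] by simp
    then show False using nm d0 by simp
  next
    case False
    have u0: "u \<noteq> 0" using ne unfolding u_def by simp
    have v0: "v \<noteq> 0" using ne unfolding v_def by simp
    obtain \<kappa> where k: "v = \<kappa> *\<^sub>R u"
    proof (cases "u = v")
      case True then show ?thesis using that[of 1] by simp
    next
      case uv: False
      with False have "\<not> independent (insert u {v})" by simp
      then have "u \<in> span {v}" using real_vector.independent_insert[of u "{v}"] indep1[OF v0] uv by auto
      then obtain k where k: "u = k *\<^sub>R v" using span1 by blast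
      then have "k \<noteq> 0" using u0 by auto
      then have "v = (1/k) *\<^sub>R u" using k by simp
      then show ?thesis using that by blast
    qed
    define \<gamma> where "\<gamma> = 1 + \<kappa> - \<alpha> - \<beta> * \<kappa>"
    have "c - b = v - (a - d) + u" unfolding u_def v_def by (simp add: algebra_simps)
    also have "\<dots> = \<gamma> *\<^sub>R u" unfolding ad k \<gamma>_def by (simp add: algebra_simps)
    finally have "\<gamma> *\<^sub>R a + (1 - \<gamma>) *\<^sub>R b + (-1) *\<^sub>R c = 0"
      unfolding u_def by (simp add: algebra_simps)
    then show False using three_case[OF M ins(1) ins(2) ins(3) ne(1) ne(2) ne(4), of \<gamma> "1-\<gamma>" "-1"] by simp
  qed
qed

lemma four_case:
  fixes x1 x2 x3 x4 :: "'a::real_normed_vector"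
  assumes d2: "dim (UNIV :: 'a set) = 2"
    and M: "M_set S" and ins: "x1 \<in> S" "x2 \<in> S" "x3 \<in> S" "x4 \<in> S"
    and ne: "x1 \<noteq> x2" "x1 \<noteq> x3" "x1 \<noteq> x4" "x2 \<noteq> x3" "x2 \<noteq> x4" "x3 \<noteq> x4"
    and sm: "c1 + c2 + c3 + c4 = 0"
    and E: "c1 *\<^sub>R x1 + c2 *\<^sub>R x2 + c3 *\<^sub>R x3 + c4 *\<^sub>R x4 = 0"
    and nz: "\<not> (c1 = 0 \<and> c2 = 0 \<and> c3 = 0 \<and> c4 = 0)"
  shows False
proof -
  have E2: "c2 *\<^sub>R x2 + c1 *\<^sub>R x1 + c3 *\<^sub>R x3 + c4 *\<^sub>R x4 = 0" using E by (simp add: algebra_simps)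
  have E3: "c3 *\<^sub>R x3 + c1 *\<^sub>R x1 + c2 *\<^sub>R x2 + c4 *\<^sub>R x4 = 0" using E by (simp add: algebra_simps)
  have E4: "c4 *\<^sub>R x4 + c1 *\<^sub>R x1 + c2 *\<^sub>R x2 + c3 *\<^sub>R x3 = 0" using E by (simp add: algebra_simps)
  have F2: "c1 *\<^sub>R x1 + c3 *\<^sub>R x3 + c2 *\<^sub>R x2 + c4 *\<^sub>R x4 = 0" using E by (simp add: algebra_simps)
  have F3: "c1 *\<^sub>R x1 + c4 *\<^sub>R x4 + c2 *\<^sub>R x2 + c3 *\<^sub>R x3 = 0" using E by (simp add: algebra_simps)
  have h1: "\<not> (c1 > 0 \<and> c2 \<le> 0 \<and> c3 \<le> 0 \<and> c4 \<le> 0)"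
    using one_pos[OF M ins(1) ins(2) ins(3) ins(4), of c1 c2 c3 c4] ne E sm by auto
  have h2: "\<not> (c2 > 0 \<and> c1 \<le> 0 \<and> c3 \<le> 0 \<and> c4 \<le> 0)"
    using one_pos[OF M ins(2) ins(1) ins(3) ins(4), of c2 c1 c3 c4] ne E2 sm by auto
  have h3: "\<not> (c3 > 0 \<and> c1 \<le> 0 \<and> c2 \<le> 0 \<and> c4 \<le> 0)"
    using one_pos[OF M ins(3) ins(1) ins(2) ins(4), of c3 c1 c2 c4] ne E3 sm by auto
  have h4: "\<not> (c4 > 0 \<and> c1 \<le> 0 \<and> c2 \<le> 0 \<and> c3 \<le> 0)"
    using one_pos[OF M ins(4) ins(1) ins(2) ins(3), of c4 c1 c2 c3] ne E4 sm by auto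
  have g1: "\<not> (c1 < 0 \<and> c2 \<ge> 0 \<and> c3 \<ge> 0 \<and> c4 \<ge> 0)"
    using one_pos[OF M ins(1) ins(2) ins(3) ins(4), of "-c1" "-c2" "-c3" "-c4"] ne neg4[OF E] sm by auto
  have g2: "\<not> (c2 < 0 \<and> c1 \<ge> 0 \<and> c3 \<ge> 0 \<and> c4 \<ge> 0)"
    using one_pos[OF M ins(2) ins(1) ins(3) ins(4), of "-c2" "-c1" "-c3" "-c4"] ne neg4[OF E2] sm by auto
  have g3: "\<not> (c3 < 0 \<and> c1 \<ge> 0 \<and> c2 \<ge> 0 \<and> c4 \<ge> 0)"
    using one_pos[OF M ins(3) ins(1) ins(2) ins(4), of "-c3" "-c1" "-c2" "-c4"] ne neg4[OF E3] sm by auto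
  have g4: "\<not> (c4 < 0 \<and> c1 \<ge> 0 \<and> c2 \<ge> 0 \<and> c3 \<ge> 0)"
    using one_pos[OF M ins(4) ins(1) ins(2) ins(3), of "-c4" "-c1" "-c2" "-c3"] ne neg4[OF E4] sm by auto
  have t1: "\<not> (c1 > 0 \<and> c2 > 0 \<and> c3 < 0 \<and> c4 < 0)"
    using two_pos[OF d2 M ins(1) ins(2) ins(3) ins(4) ne, of c1 c2 c3 c4] E sm by auto
  have t2: "\<not> (c1 > 0 \<and> c3 > 0 \<and> c2 < 0 \<and> c4 < 0)"
    using two_pos[OF d2 M ins(1) ins(3) ins(2) ins(4), of c1 c3 c2 c4] ne F2 sm by auto
  have t3: "\<not> (c1 > 0 \<and> c4 > 0 \<and> c2 < 0 \<and> c3 < 0)"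
    using two_pos[OF d2 M ins(1) ins(4) ins(2) ins(3), of c1 c4 c2 c3] ne F3 sm by auto
  have u1: "\<not> (c1 < 0 \<and> c2 < 0 \<and> c3 > 0 \<and> c4 > 0)"
    using two_pos[OF d2 M ins(1) ins(2) ins(3) ins(4) ne, of "-c1" "-c2" "-c3" "-c4"] neg4[OF E] sm by auto
  have u2: "\<not> (c1 < 0 \<and> c3 < 0 \<and> c2 > 0 \<and> c4 > 0)"
    using two_pos[OF d2 M ins(1) ins(3) ins(2) ins(4), of "-c1" "-c3" "-c2" "-c4"] ne neg4[OF F2] sm by auto
  have u3: "\<not> (c1 < 0 \<and> c4 < 0 \<and> c2 > 0 \<and> c3 > 0)"
    using two_pos[OF d2 M ins(1) ins(4) ins(2) ins(3), of "-c1" "-c4" "-c2" "-c3"] ne neg4[OF F3] sm by auto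
  show False using h1 h2 h3 h4 g1 g2 g3 g4 t1 t2 t3 u1 u2 u3 sm nz by smt
qed

lemma no4:
  fixes x1 x2 x3 x4 :: "'a::real_normed_vector"
  assumes d2: "dim (UNIV :: 'a set) = 2"
    and M: "M_set S" and ins: "x1 \<in> S" "x2 \<in> S" "x3 \<in> S" "x4 \<in> S"
    and ne: "x1 \<noteq> x2" "x1 \<noteq> x3" "x1 \<noteq> x4" "x2 \<noteq> x3" "x2 \<noteq> x4" "x3 \<noteq> x4"
  shows False
proof -
  note FC = four_case[OF d2 M ins ne]
  define y1 where "y1 = x1 - x4"
  define y2 where "y2 = x2 - x4"
  define y3 where "y3 = x3 - x4"
  have y3: "y3 \<noteq> 0" using ne unfolding y3_def by simp
  show False
  proof (cases "y2 \<in> span {y3}")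
    case True
    then obtain k where k: "y2 = k *\<^sub>R y3" using span1 by blast
    have "0 *\<^sub>R x1 + 1 *\<^sub>R x2 + (-k) *\<^sub>R x3 + (k-1) *\<^sub>R x4 = y2 - k *\<^sub>R y3"
      unfolding y2_def y3_def by (simp add: algebra_simps)
    also have "\<dots> = 0" using k by simp
    finally show False using FC[of 0 1 "-k" "k-1"] by simp
  next
    case False
    have i23: "independent {y2, y3}" using real_vector.independent_insertI[OF False indep1[OF y3]] .
    show False
    proof (cases "y1 \<in> span {y2, y3}")
      case True
      then obtain \<sigma> \<tau> where st: "y1 = \<sigma> *\<^sub>R y2 + \<tau> *\<^sub>R y3" using span2 by blast
      have "1 *\<^sub>R x1 + (-\<sigma>) *\<^sub>R x2 + (-\<tau>) *\<^sub>R x3 + (\<sigma>+\<tau>-1) *\<^sub>R x4 = y1 - (\<sigma> *\<^sub>R y2 + \<tau> *\<^sub>R y3)"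
        unfolding y1_def y2_def y3_def by (simp add: algebra_simps)
      also have "\<dots> = 0" using st by simp
      finally show False using FC[of 1 "-\<sigma>" "-\<tau>" "\<sigma>+\<tau>-1"] by simp
    next
      case False
      have "independent {y1, y2, y3}" using real_vector.independent_insertI[OF False i23] .
      moreover have "y1 \<noteq> y2" "y1 \<noteq> y3" "y2 \<noteq> y3" using ne unfolding y1_def y2_def y3_def by auto
      ultimately show False using no3[OF d2] by blast
    qed
  qed
qed

lemma bound3:
  fixes S :: "'a::real_normed_vector set"
  assumes d2: "dim (UNIV :: 'a set) = 2" and M: "M_set S"
  shows "finite S \<and> card S \<le> 3"
proof (rule ccontr)
  assume "\<not> (finite S \<and> card S \<le> 3)"
  then obtain T where T: "T \<subseteq> S" "card T = 4"
  proof (cases "finite S")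
    case True
    then have "4 \<le> card S" using \<open>\<not> (finite S \<and> card S \<le> 3)\<close> by simp
    then show ?thesis using obtain_subset_with_card_n that by blast
  next
    case False
    then show ?thesis using infinite_arbitrarily_large[OF False, of 4] that by blast
  qed
  then obtain x1 x2 x3 x4 where "T = {x1,x2,x3,x4}" "x1 \<noteq> x2" "x1 \<noteq> x3" "x1 \<noteq> x4"
    "x2 \<noteq> x3" "x2 \<noteq> x4" "x3 \<noteq> x4"
    by (auto simp: card_Suc_eq numeral_eq_Suc)
  then show False using no4[OF d2 M] T(1) by blast
qed

lemma exists3:
  assumes d2: "dim (UNIV :: 'a::real_normed_vector set) = 2"
  shows "\<exists>S::'a set. M_set S \<and> finite S \<and> card S = 3"
proof -
  obtain B :: "'a set" where B: "independent B" "card B = 2"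
    using real_vector.basis_exists[of "UNIV :: 'a set"] d2 by metis
  then obtain b1 b2 where bb: "B = {b1, b2}" "b1 \<noteq> b2" by (auto simp: card_2_iff)
  have i: "independent {b1, b2}" using B bb by simp
  have b1: "b1 \<noteq> 0" using i real_vector.dependent_zero by blast
  have nsp: "b2 \<notin> span {b1}"
  proof
    assume "b2 \<in> span {b1}"
    then have "dependent (insert b2 {b1})" using bb(2) real_vector.independent_insert[of b2 "{b1}"] by auto
    then show False using i by (simp add: insert_commute)
  qed
  define a where "a = (1 / norm b1) *\<^sub>R b1"
  have na: "norm a = 1" using b1 unfolding a_def by simp
  define v where "v = b2"
  have nv: "v \<noteq> k *\<^sub>R a" for k
  proof
    assume "v = k *\<^sub>R a"
    then have "b2 = (k / norm b1) *\<^sub>R b1" unfolding a_def v_def by simp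
    then have "b2 \<in> span {b1}" by (simp add: real_vector.span_base real_vector.span_scale)
    with nsp show False by simp
  qed
  define p where "p t = (1 - 2*t) *\<^sub>R a + (t * (1 - t)) *\<^sub>R v" for t :: real
  have p0: "p t \<noteq> 0" for t
  proof
    assume h: "p t = 0"
    show False
    proof (cases "t * (1 - t) = 0")
      case True
      then have "t = 0 \<or> t = 1" by auto
      then show False using h na unfolding p_def by auto
    next
      case False
      from h have "(t * (1 - t)) *\<^sub>R v = - ((1 - 2*t) *\<^sub>R a)" unfolding p_def by (simp add: eq_neg_iff_add_eq_0 add.commute)
      then have "(1 / (t * (1 - t))) *\<^sub>R ((t * (1 - t)) *\<^sub>R v) = (1 / (t * (1 - t))) *\<^sub>R (- ((1 - 2*t) *\<^sub>R a))" by simp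
      then have "v = - (((1 - 2*t) / (t * (1 - t))) *\<^sub>R a)" using False by simp
      then have "v = (- ((1 - 2*t) / (t * (1 - t)))) *\<^sub>R a" by (simp only: scaleR_minus_left)
      then show False using nv by blast
    qed
  qed
  define g where "g t = norm (a + (1 / norm (p t)) *\<^sub>R p t)" for t
  have cont: "continuous_on {0..1} g"
    unfolding g_def p_def using p0[unfolded p_def] by (intro continuous_intros) auto
  have g0: "g 0 = 2" unfolding g_def p_def using na by (simp add: scaleR_2[symmetric])
  have g1: "g 1 = 0" unfolding g_def p_def using na by simp
  obtain t where "g t = 1" using IVT2'[of g 1 1 0] cont g0 g1 by auto
  define b where "b = (1 / norm (p t)) *\<^sub>R p t"
  have nb: "norm b = 1" using p0[of t] unfolding b_def by simp
  have nab: "norm (a + b) = 1" using \<open>g t = 1\<close> unfolding g_def b_def by simp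
  define c where "c = - (a + b)"
  have nc: "norm c = 1" using nab unfolding c_def norm_minus_cancel .
  have ab: "a \<noteq> b" using nab na by (auto simp: scaleR_2[symmetric])
  have bc: "b \<noteq> c"
  proof
    assume "b = c"
    then have "a = (-2) *\<^sub>R b" unfolding c_def by (simp add: algebra_simps scaleR_2[symmetric] eq_neg_iff_add_eq_0)
    then show False using na nb by simp
  qed
  have ac: "a \<noteq> c"
  proof
    assume "a = c"
    have "b = -a - (-(a+b))" by (simp add: algebra_simps)
    also have "\<dots> = -a - a" using \<open>a = c\<close> unfolding c_def by simp
    also have "\<dots> = (-2) *\<^sub>R a" by (simp add: scaleR_2 algebra_simps)
    finally have "b = (-2) *\<^sub>R a" .
    then show False using na nb by simp
  qed
  define S where "S = {2 *\<^sub>R a, 2 *\<^sub>R b, 2 *\<^sub>R c}"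
  have m1: "norm ((1/2) *\<^sub>R (2 *\<^sub>R a + 2 *\<^sub>R b)) = 1" using nab by (simp add: scaleR_add_right[symmetric])
  have m2: "norm ((1/2) *\<^sub>R (2 *\<^sub>R a + 2 *\<^sub>R c)) = 1"
  proof -
    have "(1/2) *\<^sub>R (2 *\<^sub>R a + 2 *\<^sub>R c) = - b" unfolding c_def by (simp add: algebra_simps)
    then show ?thesis using nb by simp
  qed
  have m3: "norm ((1/2) *\<^sub>R (2 *\<^sub>R b + 2 *\<^sub>R c)) = 1"
  proof -
    have "(1/2) *\<^sub>R (2 *\<^sub>R b + 2 *\<^sub>R c) = - a" unfolding c_def by (simp add: algebra_simps)
    then show ?thesis using na by simp
  qed
  have "M_set S"
    unfolding M_set_def midpoint_set_def S_def
    using m1 m2 m3 na nb nc by (auto simp: add.commute)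
  moreover have "card S = 3" unfolding S_def using ab bc ac by simp
  ultimately show ?thesis unfolding S_def by blast
qed

theorem theorem1:
  assumes "dim (UNIV :: 'a::real_normed_vector set) = 2"
  shows "m_num TYPE('a) = 3"
proof -
  let ?P = "\<lambda>n. \<exists>S::'a set. M_set S \<and> finite S \<and> card S = n"
  have e: "?P 3" using exists3[OF assms] .
  have b: "\<forall>S::'a set. M_set S \<longrightarrow> finite S \<and> card S \<le> 3" using bound3[OF assms] by blast
  have g: "(GREATEST n. ?P n) = 3"
    by (rule Greatest_equality) (use e b in auto)
  show ?thesis unfolding m_num_def using e b g by (auto simp: numeral_eq_enat)
qed

end
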